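(* Let $\alpha>0$, $\beta,\eta,\kappa\in\mathbb{R}$, $\rho>0$, $p\ge 1$, and $0\le a<x$. Let $f,g$ be two positive functions on $[0,\infty)$ with $f,g\in X^{p}_{c}(a,x)$ (for some $c\in\mathbb{R}$), such that ${}^{\rho}\mathcal{I}^{\alpha,\beta}_{a+,\eta,\kappa}f(x)<\infty$ and ${}^{\rho}\mathcal{I}^{\alpha,\beta}_{a+,\eta,\kappa}g(x)<\infty$. If there are real numbers $m,M>0$ with $0<m\leq \frac{f(t)}{g(t)}\leq M$ for all $t\in[a,x]$, then $$\frac{1}{M}\,{}^{\rho}\mathcal{I}^{\alpha,\beta}_{a+,\eta,\kappa}(fg)(x)\leq\frac{1}{(m+1)(M+1)}\,{}^{\rho}\mathcal{I}^{\alpha,\beta}_{a+,\eta,\kappa}(f+g)^{2}(x)\leq\frac{1}{m}\,{}^{\rho}\mathcal{I}^{\alpha,\beta}_{a+,\eta,\kappa}(fg)(x).$$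
   Context: For $c\in\mathbb{R}$ and $1\le p<\infty$, $X^{p}_{c}(a,b)$ denotes the space of Lebesgue measurable functions $f$ on $(a,b)$ with $\left(\int_a^b |t^{c}f(t)|^{p}\,\frac{dt}{t}\right)^{1/p}<\infty$. For $\alpha>0$, $\beta,\eta,\kappa\in\mathbb{R}$, $\rho>0$, $0\le a<x$, and a function $\varphi$, the generalized (Katugampola) fractional integral is $${}^{\rho}\mathcal{I}^{\alpha,\beta}_{a+,\eta,\kappa}\varphi(x)=\frac{\rho^{1-\beta}x^{\kappa}}{\Gamma(\alpha)}\int_{a}^{x}\frac{\tau^{\rho(\eta+1)-1}}{(x^{\rho}-\tau^{\rho})^{1-\alpha}}\varphi(\tau)\,d\tau,$$ whenever the integral exists. ${}^{\rho}\mathcal{I}^{\alpha,\beta}_{a+,\eta,\kappa}(fg)(x)$ and ${}^{\rho}\mathcal{I}^{\alpha,\beta}_{a+,\eta,\kappa}(f+g)^{2}(x)$ denote the operator applied to $\tau\mapsto f(\tau)g(\tau)$, resp. $\tau\mapsto(f(\tau)+g(\tau))^2$, evaluated at $x$. *)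

theory Defs
  imports "HOL-Analysis.Analysis"
begin

definition Xpc :: "real \<Rightarrow> real \<Rightarrow> real \<Rightarrow> real \<Rightarrow> (real \<Rightarrow> real) \<Rightarrow> bool" where
  "Xpc c p a b f \<longleftrightarrow>
     set_borel_measurable lebesgue {a<..<b} f \<and>
     set_integrable lebesgue {a<..<b} (\<lambda>t. \<bar>t powr c * f t\<bar> powr p / t)"

definition katu_kernel ::
  "real \<Rightarrow> real \<Rightarrow> real \<Rightarrow> real \<Rightarrow> (real \<Rightarrow> real) \<Rightarrow> real \<Rightarrow> real" where
  "katu_kernel \<rho> \<alpha> \<eta> x \<phi> \<tau> =
     \<tau> powr (\<rho> * (\<eta> + 1) - 1) / (x powr \<rho> - \<tau> powr \<rho>) powr (1 - \<alpha>) * \<phi> \<tau>"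

definition katu_int ::
  "real \<Rightarrow> real \<Rightarrow> real \<Rightarrow> real \<Rightarrow> real \<Rightarrow> real \<Rightarrow> (real \<Rightarrow> real) \<Rightarrow> real \<Rightarrow> real" where
  "katu_int \<rho> \<alpha> \<beta> a \<eta> \<kappa> \<phi> x =
     \<rho> powr (1 - \<beta>) * x powr \<kappa> / Gamma \<alpha> *
     (LINT \<tau>:{a<..<x}|lebesgue. katu_kernel \<rho> \<alpha> \<eta> x \<phi> \<tau>)"

definition katu_int_exists ::
  "real \<Rightarrow> real \<Rightarrow> real \<Rightarrow> real \<Rightarrow> (real \<Rightarrow> real) \<Rightarrow> real \<Rightarrow> bool" where
  "katu_int_exists \<rho> \<alpha> a \<eta> \<phi> x \<longleftrightarrow>
     set_integrable lebesgue {a<..<x} (katu_kernel \<rho> \<alpha> \<eta> x \<phi>)"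

end

theory Submission
  imports Defs
begin

lemma two_sided_int:
  fixes u v :: "real \<Rightarrow> real"
  assumes mu: "set_borel_measurable M S u" and mv: "set_borel_measurable M S v"
    and nn: "\<And>t. t \<in> S \<Longrightarrow> 0 \<le> v t" and c: "c > 0" and d: "d > 0"
    and b: "\<And>t. t \<in> S \<Longrightarrow> c * v t \<le> u t \<and> u t \<le> d * v t"
  shows "c * (LINT t:S|M. v t) \<le> (LINT t:S|M. u t) \<and> (LINT t:S|M. u t) \<le> d * (LINT t:S|M. v t)"
proof (cases "set_integrable M S v")
  case True
  have iu: "set_integrable M S u"
  proof (rule set_integrable_bound[OF _ mu])
    show "set_integrable M S (\<lambda>t. d * v t)" using True by (simp add: set_integrable_mult_right)
    show "AE t in M. t \<in> S \<longrightarrow> norm (u t) \<le> norm (d * v t)"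
    proof (rule AE_I2, intro impI)
      fix t assume "t \<in> S"
      have bt: "c * v t \<le> u t" "u t \<le> d * v t" using b[OF \<open>t \<in> S\<close>] by auto
      have "0 \<le> c * v t" using c nn[OF \<open>t \<in> S\<close>] by simp
      hence "0 \<le> u t" using bt by linarith
      note this bt(2)
      thus "norm (u t) \<le> norm (d * v t)" by simp
    qed
  qed
  have ic: "set_integrable M S (\<lambda>t. c * v t)" and id: "set_integrable M S (\<lambda>t. d * v t)"
    using True by (simp_all add: set_integrable_mult_right)
  have 1: "(LINT t:S|M. c * v t) \<le> (LINT t:S|M. u t)"
    by (rule set_integral_mono[OF ic iu]) (use b in blast)
  have 2: "(LINT t:S|M. u t) \<le> (LINT t:S|M. d * v t)"
    by (rule set_integral_mono[OF iu id]) (use b in blast)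
  show ?thesis using 1 2 by simp
next
  case False
  have nu: "\<not> set_integrable M S u"
  proof
    assume iu: "set_integrable M S u"
    have "set_integrable M S (\<lambda>t. (1/c) * u t)" using iu by (simp add: set_integrable_mult_right)
    hence "set_integrable M S v"
    proof (rule set_integrable_bound[OF _ mv])
      show "AE t in M. t \<in> S \<longrightarrow> norm (v t) \<le> norm (1 / c * u t)"
      proof (rule AE_I2, intro impI)
        fix t assume "t \<in> S"
        have bt: "c * v t \<le> u t" using b[OF \<open>t \<in> S\<close>] by auto
        have "v t \<le> u t / c" using bt c by (simp add: field_simps)
        note nn[OF \<open>t \<in> S\<close>] this
        hence "v t \<le> \<bar>u t\<bar> / c" using c by (smt (verit) divide_right_mono abs_ge_self)
        thus "norm (v t) \<le> norm (1 / c * u t)" using c nn[OF \<open>t \<in> S\<close>] by simp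
      qed
    qed
    with False show False by simp
  qed
  have "(LINT t:S|M. v t) = 0" "(LINT t:S|M. u t) = 0"
    using False nu unfolding set_lebesgue_integral_def set_integrable_def
    by (auto intro: not_integrable_integral_eq)
  thus ?thesis by simp
qed

lemma weight_meas: "(\<lambda>\<tau>::real. \<tau> powr (r * (e + 1) - 1) / (x powr r - \<tau> powr r) powr (1 - al)) \<in> borel_measurable lebesgue"
  by (rule measurable_completion) simp

lemma pointwise:
  fixes f g m M :: real
  assumes "f > 0" "g > 0" "m > 0" "M > 0" "m * g \<le> f" "f \<le> M * g"
  shows "(m+1)*(M+1)/M * (f*g) \<le> (f+g)^2 \<and> (f+g)^2 \<le> (m+1)*(M+1)/m * (f*g)"
proof -
  have a1: "(m+1)*g \<le> f+g" "f+g \<le> (M+1)*g" using assms by (auto simp: algebra_simps)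
  have a2: "f*(M+1)/M \<le> f+g" using assms by (simp add: field_simps)
  have a3: "f+g \<le> f*(m+1)/m" using assms by (simp add: field_simps)
  have "((m+1)*g) * (f*(M+1)/M) \<le> (f+g)*(f+g)"
    by (rule mult_mono) (use a1 a2 assms in auto)
  moreover have "(f+g)*(f+g) \<le> ((M+1)*g) * (f*(m+1)/m)"
    by (rule mult_mono) (use a1 a3 assms in auto)
  ultimately show ?thesis by (simp add: power2_eq_square field_simps)
qed

theorem theorem14:
  fixes \<alpha> \<beta> \<eta> \<kappa> \<rho> p a x c m M :: real and f g :: "real \<Rightarrow> real"
  assumes "\<alpha> > 0" and "\<rho> > 0" and "p \<ge> 1" and "0 \<le> a" and "a < x"
    and "\<And>t. t \<ge> 0 \<Longrightarrow> f t > 0" and "\<And>t. t \<ge> 0 \<Longrightarrow> g t > 0"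
    and "Xpc c p a x f" and "Xpc c p a x g"
    and "katu_int_exists \<rho> \<alpha> a \<eta> f x" and "katu_int_exists \<rho> \<alpha> a \<eta> g x"
    and "m > 0" and "M > 0"
    and "\<And>t. t \<in> {a..x} \<Longrightarrow> m \<le> f t / g t \<and> f t / g t \<le> M"
  shows "1 / M * katu_int \<rho> \<alpha> \<beta> a \<eta> \<kappa> (\<lambda>t. f t * g t) x
           \<le> 1 / ((m + 1) * (M + 1)) * katu_int \<rho> \<alpha> \<beta> a \<eta> \<kappa> (\<lambda>t. (f t + g t)\<^sup>2) x
       \<and> 1 / ((m + 1) * (M + 1)) * katu_int \<rho> \<alpha> \<beta> a \<eta> \<kappa> (\<lambda>t. (f t + g t)\<^sup>2) x
           \<le> 1 / m * katu_int \<rho> \<alpha> \<beta> a \<eta> \<kappa> (\<lambda>t. f t * g t) x"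
proof -
  define S where "S = {a<..<x}"
  define w where "w = (\<lambda>\<tau>::real. \<tau> powr (\<rho> * (\<eta> + 1) - 1) / (x powr \<rho> - \<tau> powr \<rho>) powr (1 - \<alpha>))"
  define A where "A = (m+1)*(M+1)"
  define C where "C = \<rho> powr (1 - \<beta>) * x powr \<kappa> / Gamma \<alpha>"
  have Apos: "A > 0" unfolding A_def using assms by simp
  have Cpos: "C > 0" unfolding C_def using assms by (simp add: Gamma_real_pos)
  have kk: "\<And>\<phi>. katu_kernel \<rho> \<alpha> \<eta> x \<phi> = (\<lambda>t. w t * \<phi> t)"
    by (simp add: katu_kernel_def w_def fun_eq_iff)
  have ki: "\<And>\<phi>. katu_int \<rho> \<alpha> \<beta> a \<eta> \<kappa> \<phi> x = C * (LINT t:S|lebesgue. w t * \<phi> t)"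
    by (simp add: katu_int_def C_def S_def kk)
  have wm: "w \<in> borel_measurable lebesgue" unfolding w_def by (rule weight_meas)
  have fm: "(\<lambda>t. indicator S t *\<^sub>R f t) \<in> borel_measurable lebesgue"
    using assms(8) by (simp add: Xpc_def set_borel_measurable_def S_def)
  have gm: "(\<lambda>t. indicator S t *\<^sub>R g t) \<in> borel_measurable lebesgue"
    using assms(9) by (simp add: Xpc_def set_borel_measurable_def S_def)
  have mv: "set_borel_measurable lebesgue S (\<lambda>t. w t * (f t * g t))"
  proof -
    have "(\<lambda>t. w t * ((indicator S t *\<^sub>R f t) * (indicator S t *\<^sub>R g t))) \<in> borel_measurable lebesgue"
      using wm fm gm by measurable
    moreover have "(\<lambda>t. w t * ((indicator S t *\<^sub>R f t) * (indicator S t *\<^sub>R g t))) = (\<lambda>t. indicator S t *\<^sub>R (w t * (f t * g t)))"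
      by (auto simp: fun_eq_iff indicator_def)
    ultimately show ?thesis unfolding set_borel_measurable_def by simp
  qed
  have mu: "set_borel_measurable lebesgue S (\<lambda>t. w t * (f t + g t)\<^sup>2)"
  proof -
    have "(\<lambda>t. w t * ((indicator S t *\<^sub>R f t) + (indicator S t *\<^sub>R g t))\<^sup>2) \<in> borel_measurable lebesgue"
      using wm fm gm by measurable
    moreover have "(\<lambda>t. w t * ((indicator S t *\<^sub>R f t) + (indicator S t *\<^sub>R g t))\<^sup>2) = (\<lambda>t. indicator S t *\<^sub>R (w t * (f t + g t)\<^sup>2))"
      by (auto simp: fun_eq_iff indicator_def)
    ultimately show ?thesis unfolding set_borel_measurable_def by simp
  qed
  have wnn: "w t \<ge> 0" if "t \<in> S" for t
  proof -
    have "t > 0" "t < x" using that assms unfolding S_def by auto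
    hence "t powr \<rho> < x powr \<rho>" using assms by (intro powr_less_mono2) auto
    thus ?thesis unfolding w_def by simp
  qed
  have pw: "A/M * (w t * (f t * g t)) \<le> w t * (f t + g t)\<^sup>2 \<and> w t * (f t + g t)\<^sup>2 \<le> A/m * (w t * (f t * g t))"
    if "t \<in> S" for t
  proof -
    have t0: "t \<ge> 0" "t \<in> {a..x}" using that assms unfolding S_def by auto
    have fp: "f t > 0" and gp: "g t > 0" using assms t0 by auto
    have r: "m \<le> f t / g t" "f t / g t \<le> M" using assms(14)[OF t0(2)] by auto
    have "m * g t \<le> f t" "f t \<le> M * g t" using r gp by (auto simp: field_simps)
    from pointwise[OF fp gp assms(12,13) this]
    have "A/M * (f t * g t) \<le> (f t + g t)\<^sup>2 \<and> (f t + g t)\<^sup>2 \<le> A/m * (f t * g t)"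
      unfolding A_def .
    with wnn[OF that] show ?thesis
      by (metis mult.left_commute mult_left_mono)
  qed
  have vnn: "0 \<le> w t * (f t * g t)" if "t \<in> S" for t
  proof -
    have "t \<ge> 0" using that assms unfolding S_def by auto
    hence "f t > 0" "g t > 0" using assms(6,7) by auto
    thus ?thesis using wnn[OF that] by simp
  qed
  have main: "A/M * (LINT t:S|lebesgue. w t * (f t * g t)) \<le> (LINT t:S|lebesgue. w t * (f t + g t)\<^sup>2)
     \<and> (LINT t:S|lebesgue. w t * (f t + g t)\<^sup>2) \<le> A/m * (LINT t:S|lebesgue. w t * (f t * g t))"
    by (rule two_sided_int[OF mu mv vnn _ _ pw]) (use Apos assms in auto)
  define IV where "IV = (LINT t:S|lebesgue. w t * (f t * g t))"
  define IU where "IU = (LINT t:S|lebesgue. w t * (f t + g t)\<^sup>2)"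
  have m1: "A/M * IV \<le> IU" "IU \<le> A/m * IV" using main unfolding IV_def IU_def by auto
  have "C/A * (A/M * IV) \<le> C/A * IU" using m1(1) Cpos Apos by (intro mult_left_mono) auto
  moreover have "C/A * IU \<le> C/A * (A/m * IV)" using m1(2) Cpos Apos by (intro mult_left_mono) auto
  moreover have "C/A * (A/M * IV) = 1/M * (C*IV)" using Apos by simp
  moreover have "C/A * (A/m * IV) = 1/m * (C*IV)" using Apos by simp
  moreover have "C/A * IU = 1/A * (C*IU)" by simp
  ultimately have "1/M * (C*IV) \<le> 1/A * (C*IU) \<and> 1/A * (C*IU) \<le> 1/m * (C*IV)"
    by linarith
  thus ?thesis
    unfolding ki IV_def[symmetric] IU_def[symmetric] A_def[symmetric] .
qed

end
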